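(* Let $(X_j)_{j\in\mathbb N}$ be the generic waiting-time sequence of a Crump-Mode-Jagers process as in the context, let $(X'_j)_{j\in\mathbb N}$ be an independent copy of it, and assume Assumption (A). Suppose that for some $\alpha>0$ and $K\in\mathbb N$, \[\sum_{j=1}^\infty\mathbb E\Big[e^{-\alpha\sum_{i=1}^jX_i}\Big]<1\quad\text{and}\quad\prod_{i=K+1}^\infty\mathbb E\Big[e^{\alpha(X'_i-X_i)}\Big]<\infty.\] Then for every $u\in\mathcal U$, \[\mathbb E\big[\,|\{v=v_1\cdots v_m\in\mathcal U:\ m\ge1,\ v_1\ge K,\ uv\text{ catches up to }u\}|\,\big]=\sum_{v\in\mathcal U:\,|v|\ge1,\ v_1\ge K}\mathbb P(uv\text{ catches up to }u)<\infty.\]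
   Context: Ulam–Harris tree: $\mathcal U=\bigcup_{n\ge0}\mathbb N^n$ with $\mathbb N^0=\{\varnothing\}$; $u=u_1\cdots u_k$, $|u|=k$, $uj$ is the $j$-th child of $u$, and $uv$ denotes concatenation. Let $(X_j)_{j\in\mathbb N}$ be $[0,\infty]$-valued random variables and for each $u\in\mathcal U$ let $(X(uj))_{j\in\mathbb N}$ be a copy of $(X_j)_j$, independent over different $u$. Birth times: $\mathcal B(\varnothing)=0$, $\mathcal B(ui)=\mathcal B(u)+\sum_{j=1}^iX(uj)$. For $u\in\mathcal U$ and $v=v_1\cdots v_m$ with $m\ge1$, "$uv$ catches up to $u$" means there exists $j\in\mathbb N$ with $\mathcal B(uv(v_1+j))\le\mathcal B(u(v_1+j))$. Assumption (A): (i) $(X_i)_{i\in\mathbb N}$ mutually independent; (ii) $X_j<\infty$ a.s. for each $j$; (iii) $\sum_{j=1}^\infty\prod_{i=1}^j\mathbb P(X_i=0)<1$. *)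

theory Defs
  imports "HOL-Probability.Probability"
begin

text \<open>Ulam--Harris labels are lists of naturals; the index set \<open>\<nat> = {1,2,...}\<close>.\<close>
definition UH :: "nat list set" where
  "UH = {u. \<forall>x\<in>set u. 1 \<le> x}"

text \<open>\<open>Xf u j \<omega>\<close> is the waiting time \<open>X(uj)\<close> (for \<open>j \<ge> 1\<close>).
  Birth times: \<open>B(\<emptyset>) = 0\<close>, \<open>B(ui) = B(u) + \<Sum>_{j=1}^i X(uj)\<close>.\<close>
fun birth_aux :: "(nat list \<Rightarrow> nat \<Rightarrow> 'a \<Rightarrow> ennreal) \<Rightarrow> 'a \<Rightarrow> nat list \<Rightarrow> nat list \<Rightarrow> ennreal" where
  "birth_aux Xf \<omega> p [] = 0"
| "birth_aux Xf \<omega> p (i # v) = (\<Sum>j\<in>{1..i}. Xf p j \<omega>) + birth_aux Xf \<omega> (p @ [i]) v"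

definition birth :: "(nat list \<Rightarrow> nat \<Rightarrow> 'a \<Rightarrow> ennreal) \<Rightarrow> nat list \<Rightarrow> 'a \<Rightarrow> ennreal" where
  "birth Xf u \<omega> = birth_aux Xf \<omega> [] u"

definition catches_up :: "(nat list \<Rightarrow> nat \<Rightarrow> 'a \<Rightarrow> ennreal) \<Rightarrow> nat list \<Rightarrow> nat list \<Rightarrow> 'a \<Rightarrow> bool" where
  "catches_up Xf u v \<omega> \<longleftrightarrow> v \<noteq> [] \<and>
     (\<exists>j\<ge>1. birth Xf (u @ v @ [hd v + j]) \<omega> \<le> birth Xf (u @ [hd v + j]) \<omega>)"

definition exp_neg :: "real \<Rightarrow> ennreal \<Rightarrow> ennreal" where
  "exp_neg \<alpha> x = (if x = \<infinity> then 0 else ennreal (exp (- \<alpha> * enn2real x)))"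

definition ecard :: "'a set \<Rightarrow> ennreal" where
  "ecard S = (if finite S then of_nat (card S) else \<infinity>)"

end

theory Submission
  imports Defs
begin


fun pc :: "nat list \<Rightarrow> nat list \<Rightarrow> (nat list \<times> nat) set" where
  "pc p [] = {}"
| "pc p (i # w) = ({p} \<times> {1..i}) \<union> pc (p @ [i]) w"

lemma finite_pc[simp]: "finite (pc p w)"
  by (induction w arbitrary: p) auto

lemma pc_len: "x \<in> pc p w \<Longrightarrow> length p \<le> length (fst x) \<and> length (fst x) < length p + length w \<and> take (length p) (fst x) = p"
proof (induction w arbitrary: p)
  case Nil then show ?case by simp
next
  case (Cons i w)
  show ?case
  proof (cases "x \<in> {p} \<times> {1..i}")
    case True then show ?thesis by auto
  next
    case False
    then have "x \<in> pc (p @ [i]) w" using Cons.prems by auto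
    from Cons.IH[OF this] have h: "Suc (length p) \<le> length (fst x)" "length (fst x) < Suc (length p + length w)"
      "take (Suc (length p)) (fst x) = p @ [i]" by auto
    have "take (length p) (take (Suc (length p)) (fst x)) = p" using h(3) by simp
    then have "take (length p) (fst x) = p" by (simp add: min_def)
    with h show ?thesis by auto
  qed
qed

lemma pc_disj: "({p} \<times> A) \<inter> pc (p @ [i]) w = {}"
  using pc_len[of _ "p @ [i]" w] by fastforce

lemma pc_append: "pc p (a @ b) = pc p a \<union> pc (p @ a) b"
  by (induction a arbitrary: p) auto

lemma pc_snoc: "pc p (w @ [i]) = pc p w \<union> ({p @ w} \<times> {1..i})"
  by (simp add: pc_append)

lemma pc_snoc_disj: "pc p w \<inter> ({p @ w} \<times> A) = {}"
  using pc_len[of _ p w] by fastforce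

lemma pc_UH: "p \<in> UH \<Longrightarrow> w \<in> UH \<Longrightarrow> pc p w \<subseteq> UH \<times> {1..}"
proof (induction w arbitrary: p)
  case Nil then show ?case by simp
next
  case (Cons i w)
  then have "p @ [i] \<in> UH" "w \<in> UH" by (auto simp: UH_def)
  with Cons.IH[of "p @ [i]"] Cons.prems show ?case by auto
qed

lemma birth_aux_sum: "birth_aux Xf \<omega> p w = (\<Sum>x\<in>pc p w. Xf (fst x) (snd x) \<omega>)"
proof (induction w arbitrary: p)
  case Nil then show ?case by simp
next
  case (Cons i w)
  have "(\<Sum>x\<in>pc p (i # w). Xf (fst x) (snd x) \<omega>) =
        (\<Sum>x\<in>{p} \<times> {1..i}. Xf (fst x) (snd x) \<omega>) + (\<Sum>x\<in>pc (p @ [i]) w. Xf (fst x) (snd x) \<omega>)"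
    by (simp add: sum.union_disjoint pc_disj)
  also have "(\<Sum>x\<in>{p} \<times> {1..i}. Xf (fst x) (snd x) \<omega>) = (\<Sum>j\<in>{1..i}. Xf p j \<omega>)"
  proof -
    have "{p} \<times> {1..i} = (\<lambda>j. (p, j)) ` {1..i}" by auto
    then show ?thesis by (simp add: sum.reindex inj_on_def)
  qed
  finally show ?case using Cons.IH by simp
qed

lemma birth_aux_append: "birth_aux Xf \<omega> p (a @ b) = birth_aux Xf \<omega> p a + birth_aux Xf \<omega> (p @ a) b"
  by (induction a arbitrary: p) (auto simp: add.assoc)

lemma exp_neg_add: "exp_neg a (x + y) = exp_neg a x * exp_neg a y"
proof (cases "x = \<infinity> \<or> y = \<infinity>")
  case True then show ?thesis by (auto simp: exp_neg_def)
next
  case False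
  then have "enn2real (x + y) = enn2real x + enn2real y"
    by (simp add: enn2real_plus less_top)
  then show ?thesis using False
  proof -
    have "exp (- (a * (enn2real x + enn2real y))) = exp (- (a * enn2real x)) * exp (- (a * enn2real y))"
      by (simp add: ring_distribs exp_diff exp_minus field_simps)
    then show ?thesis using False \<open>enn2real (x + y) = _\<close>
      by (simp add: exp_neg_def ennreal_mult'[symmetric])
  qed
qed

lemma exp_neg_sum: "finite A \<Longrightarrow> exp_neg a (\<Sum>x\<in>A. f x) = (\<Prod>x\<in>A. exp_neg a (f x))"
proof (induction A rule: finite_induct)
  case empty then show ?case by (simp add: exp_neg_def)
next
  case (insert x F) then show ?case by (simp add: exp_neg_add)
qed

lemma exp_neg_le1: "a \<ge> 0 \<Longrightarrow> exp_neg a x \<le> 1"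
  by (auto simp: exp_neg_def)




locale cmj = prob_space M
  for M :: "'a measure"
  and Xf :: "nat list \<Rightarrow> nat \<Rightarrow> 'a \<Rightarrow> ennreal"
  and Xp :: "nat \<Rightarrow> 'a \<Rightarrow> ennreal"
  and \<alpha> :: real and K :: nat +
  assumes meas: "\<And>v j. Xf v j \<in> borel_measurable M"
    and measp: "\<And>j. Xp j \<in> borel_measurable M"
    and copies: "\<And>v. v \<in> UH \<Longrightarrow>
       distr M (PiM {1..} (\<lambda>_. borel)) (\<lambda>\<omega>. restrict (\<lambda>j. Xf v j \<omega>) {1..})
     = distr M (PiM {1..} (\<lambda>_. borel)) (\<lambda>\<omega>. restrict (\<lambda>j. Xf [] j \<omega>) {1..})"
    and indep_tree: "indep_vars (\<lambda>_. PiM {1..} (\<lambda>_. borel))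
       (\<lambda>v \<omega>. restrict (\<lambda>j. Xf v j \<omega>) {1..}) UH"
    and copy_p: "distr M (PiM {1..} (\<lambda>_. borel)) (\<lambda>\<omega>. restrict (\<lambda>j. Xp j \<omega>) {1..})
     = distr M (PiM {1..} (\<lambda>_. borel)) (\<lambda>\<omega>. restrict (\<lambda>j. Xf [] j \<omega>) {1..})"
    and indep_p: "indep_var
       (PiM {1..} (\<lambda>_. borel)) (\<lambda>\<omega>. restrict (\<lambda>j. Xf [] j \<omega>) {1..})
       (PiM {1..} (\<lambda>_. borel)) (\<lambda>\<omega>. restrict (\<lambda>j. Xp j \<omega>) {1..})"
    and A1: "indep_vars (\<lambda>_. borel) (\<lambda>j. Xf [] j) {1..}"
    and A2: "\<And>j. 1 \<le> j \<Longrightarrow> AE \<omega> in M. Xf [] j \<omega> < \<infinity>"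
    and alpha: "\<alpha> > 0" and K: "1 \<le> K"
begin

declare meas[measurable] measp[measurable]

definition F :: "nat list \<times> nat \<Rightarrow> 'a \<Rightarrow> ennreal" where
  "F x = Xf (fst x) (snd x)"

definition IDX :: "(nat list \<times> nat) set" where
  "IDX = UH \<times> {1..}"

lemma F_meas[measurable]: "F x \<in> borel_measurable M"
  by (simp add: F_def)

lemma restrict_meas[measurable]: "(\<lambda>\<omega>. restrict (\<lambda>j. Xf v j \<omega>) {1..}) \<in> measurable M (PiM {1..} (\<lambda>_. borel))"
  by (rule measurable_restrict) simp

lemma restrict_meas_p[measurable]: "(\<lambda>\<omega>. restrict (\<lambda>j. Xp j \<omega>) {1..}) \<in> measurable M (PiM {1..} (\<lambda>_. borel))"
  by (rule measurable_restrict) simp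

lemma distr_X:
  assumes "p \<in> UH" "1 \<le> i"
  shows "distr M borel (Xf p i) = distr M borel (Xf [] i)"
proof -
  have i: "i \<in> {1..}" using assms by simp
  have "distr M borel (Xf p i) = distr (distr M (PiM {1..} (\<lambda>_. borel)) (\<lambda>\<omega>. restrict (\<lambda>j. Xf p j \<omega>) {1..})) borel (\<lambda>f. f i)"
    using i by (subst distr_distr) (auto intro!: distr_cong measurable_component_singleton)
  also have "\<dots> = distr (distr M (PiM {1..} (\<lambda>_. borel)) (\<lambda>\<omega>. restrict (\<lambda>j. Xf [] j \<omega>) {1..})) borel (\<lambda>f. f i)"
    using copies[OF assms(1)] by simp
  also have "\<dots> = distr M borel (Xf [] i)"
    using i by (subst distr_distr) (auto intro!: distr_cong measurable_component_singleton)
  finally show ?thesis .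
qed

lemma distr_Xp:
  assumes "1 \<le> i"
  shows "distr M borel (Xp i) = distr M borel (Xf [] i)"
proof -
  have i: "i \<in> {1..}" using assms by simp
  have "distr M borel (Xp i) = distr (distr M (PiM {1..} (\<lambda>_. borel)) (\<lambda>\<omega>. restrict (\<lambda>j. Xp j \<omega>) {1..})) borel (\<lambda>f. f i)"
    using i by (subst distr_distr) (auto intro!: distr_cong measurable_component_singleton)
  also have "\<dots> = distr (distr M (PiM {1..} (\<lambda>_. borel)) (\<lambda>\<omega>. restrict (\<lambda>j. Xf [] j \<omega>) {1..})) borel (\<lambda>f. f i)"
    using copy_p by simp
  also have "\<dots> = distr M borel (Xf [] i)"
    using i by (subst distr_distr) (auto intro!: distr_cong measurable_component_singleton)
  finally show ?thesis .
qed

lemma distr_F: "x \<in> IDX \<Longrightarrow> distr M borel (F x) = distr M borel (Xf [] (snd x))"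
  unfolding F_def IDX_def by (cases x) (auto intro!: distr_X)

lemma integral_F:
  assumes "x \<in> IDX" "g \<in> borel_measurable borel"
  shows "(\<integral>\<^sup>+\<omega>. g (F x \<omega>) \<partial>M) = (\<integral>\<^sup>+\<omega>. g (Xf [] (snd x) \<omega>) \<partial>M)"
proof -
  have "(\<integral>\<^sup>+\<omega>. g (F x \<omega>) \<partial>M) = (\<integral>\<^sup>+y. g y \<partial>distr M borel (F x))"
    using assms by (subst nn_integral_distr) auto
  also have "\<dots> = (\<integral>\<^sup>+y. g y \<partial>distr M borel (Xf [] (snd x)))"
    using distr_F[OF assms(1)] by simp
  also have "\<dots> = (\<integral>\<^sup>+\<omega>. g (Xf [] (snd x) \<omega>) \<partial>M)"
    using assms by (subst nn_integral_distr) auto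
  finally show ?thesis .
qed

lemma prob_X:
  assumes "p \<in> UH" "1 \<le> i" "B \<in> sets borel"
  shows "prob (Xf p i -` B \<inter> space M) = prob (Xf [] i -` B \<inter> space M)"
proof -
  have "prob (Xf p i -` B \<inter> space M) = measure (distr M borel (Xf p i)) B"
    using assms by (subst measure_distr) auto
  also have "\<dots> = measure (distr M borel (Xf [] i)) B" using distr_X[OF assms(1,2)] by simp
  also have "\<dots> = prob (Xf [] i -` B \<inter> space M)"
    using assms by (subst measure_distr) auto
  finally show ?thesis .
qed

lemma indep_F: "indep_vars (\<lambda>_. borel) F IDX"
  unfolding indep_vars_def2
proof (intro conjI ballI indep_setsI)
  fix x assume "x \<in> IDX" then show "random_variable borel (F x)" by simp
next
  fix x assume "x \<in> IDX"
  show "{F x -` A \<inter> space M |A. A \<in> sets borel} \<subseteq> events" by auto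
next
  fix A J assume J: "J \<noteq> {}" "J \<subseteq> IDX" "finite J" and AJ: "\<forall>j\<in>J. A j \<in> {F j -` A \<inter> space M |A. A \<in> sets borel}"
  then have "\<forall>j\<in>J. \<exists>B. B \<in> sets borel \<and> A j = F j -` B \<inter> space M" by auto
  then obtain B where B: "\<And>j. j \<in> J \<Longrightarrow> B j \<in> sets borel" "\<And>j. j \<in> J \<Longrightarrow> A j = F j -` B j \<inter> space M"
    by metis
  define P where "P = fst ` J"
  define Jp where "Jp p = {i. (p, i) \<in> J}" for p
  have finP: "finite P" "P \<noteq> {}" using J by (auto simp: P_def)
  have PUH: "P \<subseteq> UH" using J by (auto simp: P_def IDX_def)
  have finJp: "finite (Jp p)" for p
  proof -
    have "Jp p \<subseteq> snd ` J" by (force simp: Jp_def)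
    then show ?thesis using J(3) finite_subset by blast
  qed
  have Jp_ne: "p \<in> P \<Longrightarrow> Jp p \<noteq> {}" for p by (force simp: P_def Jp_def)
  have Jp_ge: "i \<in> Jp p \<Longrightarrow> 1 \<le> i" for p i using J(2) by (auto simp: Jp_def IDX_def)
  have J_Sigma: "J = Sigma P Jp" by (force simp: P_def Jp_def)
  define V where "V p \<omega> = restrict (\<lambda>j. Xf p j \<omega>) {1..}" for p \<omega>
  have Vm: "V p \<in> measurable M (PiM {1..} (\<lambda>_. borel))" for p
    unfolding V_def by (rule restrict_meas)
  define D where "D p = {f \<in> space (PiM {1..} (\<lambda>_. borel :: ennreal measure)). \<forall>i\<in>Jp p. f i \<in> B (p, i)}" for p
  have D_sets: "D p \<in> sets (PiM {1..} (\<lambda>_. borel))" if "p \<in> P" for p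
  proof -
    have "D p = (\<Inter>i\<in>Jp p. (\<lambda>f. f i) -` B (p, i) \<inter> space (PiM {1..} (\<lambda>_. borel :: ennreal measure)))
       \<inter> space (PiM {1..} (\<lambda>_. borel :: ennreal measure))"
      by (auto simp: D_def)
    also have "\<dots> \<in> sets (PiM {1..} (\<lambda>_. borel))"
      using finJp[of p] Jp_ge B(1) J_Sigma that Jp_ne[OF that]
      by (intro sets.Int sets.finite_INT sets.top measurable_sets[OF measurable_component_singleton]) auto
    finally show ?thesis .
  qed
  have VD: "V p -` D p \<inter> space M = (\<Inter>i\<in>Jp p. Xf p i -` B (p, i) \<inter> space M) \<inter> space M" for p
    using Jp_ge by (auto simp: V_def D_def space_PiM)
  have "(\<Inter>j\<in>J. A j) = (\<Inter>p\<in>P. V p -` D p \<inter> space M)"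
    unfolding VD using J(1) Jp_ne B(2)
    by (auto simp: J_Sigma F_def)
  then have "prob (\<Inter>j\<in>J. A j) = prob (\<Inter>p\<in>P. V p -` D p \<inter> space M)" by simp
  also have "\<dots> = (\<Prod>p\<in>P. prob (V p -` D p \<inter> space M))"
    using indep_varsD[OF indep_tree finP(2) finP(1) PUH] D_sets unfolding V_def by auto
  also have "\<dots> = (\<Prod>p\<in>P. \<Prod>i\<in>Jp p. prob (A (p, i)))"
  proof (rule prod.cong[OF refl])
    fix p assume p: "p \<in> P"
    have "prob (V p -` D p \<inter> space M) = measure (distr M (PiM {1..} (\<lambda>_. borel)) (V p)) (D p)"
      by (rule measure_distr[OF Vm D_sets[OF p], symmetric])
    also have "\<dots> = measure (distr M (PiM {1..} (\<lambda>_. borel)) (V [])) (D p)"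
      using copies p PUH unfolding V_def by auto
    also have "\<dots> = prob (V [] -` D p \<inter> space M)"
      by (rule measure_distr[OF Vm D_sets[OF p]])
    also have "V [] -` D p \<inter> space M = (\<Inter>i\<in>Jp p. Xf [] i -` B (p, i) \<inter> space M) \<inter> space M"
      using Jp_ge by (auto simp: V_def D_def space_PiM)
    also have "\<dots> = (\<Inter>i\<in>Jp p. Xf [] i -` B (p, i) \<inter> space M)" using Jp_ne[OF p] by auto
    also have "prob \<dots> = (\<Prod>i\<in>Jp p. prob (Xf [] i -` B (p, i) \<inter> space M))"
      using A1 Jp_ne[OF p] finJp[of p] Jp_ge B(1) J_Sigma p
      by (intro indep_varsD) auto
    also have "\<dots> = (\<Prod>i\<in>Jp p. prob (A (p, i)))"
    proof (rule prod.cong[OF refl])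
      fix i assume i: "i \<in> Jp p"
      have "(p, i) \<in> J" using i by (simp add: Jp_def)
      then show "prob (Xf [] i -` B (p, i) \<inter> space M) = prob (A (p, i))"
        using prob_X[of p i "B (p, i)"] B p PUH Jp_ge[OF i] by (auto simp: F_def)
    qed
    finally show "prob (V p -` D p \<inter> space M) = (\<Prod>i\<in>Jp p. prob (A (p, i)))" .
  qed
  also have "\<dots> = (\<Prod>j\<in>J. prob (A j))"
    unfolding J_Sigma using finP finJp by (subst prod.Sigma) auto
  finally show "prob (\<Inter>j\<in>J. A j) = (\<Prod>j\<in>J. prob (A j))" .
qed

end



lemma eval_PiM_meas: "(\<lambda>\<xi>. \<xi> x) \<in> borel_measurable (PiM J (\<lambda>_. borel :: ennreal measure))"
proof (cases "x \<in> J")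
  case True then show ?thesis by (rule measurable_component_singleton)
next
  case False
  have c: "(\<lambda>_. undefined :: ennreal) \<in> borel_measurable (PiM J (\<lambda>_. borel :: ennreal measure))" by (rule measurable_const) simp
  show ?thesis
  proof (rule measurable_cong[THEN iffD1, OF _ c])
    fix w assume "w \<in> space (PiM J (\<lambda>_. borel :: ennreal measure))"
    then have "w \<in> PiE J (\<lambda>_. UNIV)" by (simp add: space_PiM)
    then show "undefined = w x" using False by (metis PiE_arb)
  qed
qed

context cmj begin

lemma countable_IDX: "countable IDX"
  by (rule countable_subset[of _ UNIV]) auto

lemma AE_X_fin: assumes "p \<in> UH" "1 \<le> i" shows "AE \<omega> in M. Xf p i \<omega> < \<infinity>"
proof -
  have e: "{\<omega>\<in>space M. \<not> Xf q i \<omega> < \<infinity>} = Xf q i -` {\<infinity>} \<inter> space M" for q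
    by (auto simp: less_top[symmetric])
  have "emeasure M {\<omega>\<in>space M. \<not> Xf [] i \<omega> < \<infinity>} = 0"
    using A2[OF assms(2)] by (subst AE_iff_measurable[symmetric]) auto
  then have "prob (Xf [] i -` {\<infinity>} \<inter> space M) = 0"
    unfolding e by (simp add: emeasure_eq_measure)
  then have "prob (Xf p i -` {\<infinity>} \<inter> space M) = 0"
    using prob_X[OF assms, of "{\<infinity>}"] by simp
  then have "emeasure M {\<omega>\<in>space M. \<not> Xf p i \<omega> < \<infinity>} = 0"
    unfolding e by (simp add: emeasure_eq_measure)
  then show ?thesis by (subst AE_iff_measurable) auto
qed

lemma AE_F_fin: "AE \<omega> in M. \<forall>x\<in>IDX. F x \<omega> < \<infinity>"
proof -
  have "\<forall>x\<in>IDX. AE \<omega> in M. F x \<omega> < \<infinity>"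
  proof
    fix x assume "x \<in> IDX"
    then show "AE \<omega> in M. F x \<omega> < \<infinity>" using AE_X_fin[of "fst x" "snd x"] by (auto simp: IDX_def F_def)
  qed
  then show ?thesis using countable_IDX by (simp add: AE_ball_countable)
qed

lemma indep_fact:
  assumes J: "finite J2" "J1 \<subseteq> IDX" "J2 \<subseteq> IDX" "J1 \<inter> J2 = {}"
    and f: "f \<in> borel_measurable (PiM J1 (\<lambda>_. borel))" and g: "\<And>x. g x \<in> borel_measurable borel"
  shows "(\<integral>\<^sup>+\<omega>. f (restrict (\<lambda>x. F x \<omega>) J1) * (\<Prod>x\<in>J2. g x (F x \<omega>)) \<partial>M)
       = (\<integral>\<^sup>+\<omega>. f (restrict (\<lambda>x. F x \<omega>) J1) \<partial>M) * (\<Prod>x\<in>J2. \<integral>\<^sup>+\<omega>. g x (F x \<omega>) \<partial>M)"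
proof -
  define Kf where "Kf j = (case j of None \<Rightarrow> J1 | Some x \<Rightarrow> {x})" for j
  define L where "L = insert None (Some ` J2)"
  have ind: "indep_vars (\<lambda>j. PiM (Kf j) (\<lambda>_. borel)) (\<lambda>j \<omega>. restrict (\<lambda>x. F x \<omega>) (Kf j)) L"
    by (rule indep_vars_restrict[OF indep_F]) (use J in \<open>auto simp: Kf_def L_def disjoint_family_on_def split: option.split\<close>)
  define h where "h j = (case j of None \<Rightarrow> f | Some x \<Rightarrow> (\<lambda>\<xi>. g x (\<xi> x)))" for j
  have ind2: "indep_vars (\<lambda>_. borel) (\<lambda>j \<omega>. h j (restrict (\<lambda>x. F x \<omega>) (Kf j))) L"
  proof (rule indep_vars_compose2[OF ind])
    fix j assume "j \<in> L"
    show "h j \<in> borel_measurable (PiM (Kf j) (\<lambda>_. borel))"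
    proof (cases j)
      case None then show ?thesis using f by (simp add: h_def Kf_def)
    next
      case (Some x)
      then show ?thesis using g[of x] by (simp add: h_def Kf_def)
    qed
  qed
  have "(\<integral>\<^sup>+\<omega>. (\<Prod>j\<in>L. h j (restrict (\<lambda>x. F x \<omega>) (Kf j))) \<partial>M) = (\<Prod>j\<in>L. \<integral>\<^sup>+\<omega>. h j (restrict (\<lambda>x. F x \<omega>) (Kf j)) \<partial>M)"
    by (rule indep_vars_nn_integral) (use J ind2 in \<open>auto simp: L_def\<close>)
  moreover have "(\<Prod>j\<in>L. h j (restrict (\<lambda>x. F x \<omega>) (Kf j))) = f (restrict (\<lambda>x. F x \<omega>) J1) * (\<Prod>x\<in>J2. g x (F x \<omega>))" for \<omega>
    using J by (simp add: L_def prod.reindex h_def Kf_def)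
  moreover have "(\<Prod>j\<in>L. \<integral>\<^sup>+\<omega>. h j (restrict (\<lambda>x. F x \<omega>) (Kf j)) \<partial>M) = (\<integral>\<^sup>+\<omega>. f (restrict (\<lambda>x. F x \<omega>) J1) \<partial>M) * (\<Prod>x\<in>J2. \<integral>\<^sup>+\<omega>. g x (F x \<omega>) \<partial>M)"
    using J by (simp add: L_def prod.reindex h_def Kf_def)
  ultimately show ?thesis by simp
qed

lemma indep_prod:
  assumes J: "finite J" "J \<subseteq> IDX" and g: "\<And>x. g x \<in> borel_measurable borel"
  shows "(\<integral>\<^sup>+\<omega>. (\<Prod>x\<in>J. g x (F x \<omega>)) \<partial>M) = (\<Prod>x\<in>J. \<integral>\<^sup>+\<omega>. g x (F x \<omega>) \<partial>M)"
  using indep_fact[of J "{}" "\<lambda>_. 1" g] assms by (simp add: emeasure_space_1)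

lemma indep_var_nn_mult:
  fixes X Y :: "'a \<Rightarrow> ennreal"
  assumes "indep_var borel X borel Y"
  shows "(\<integral>\<^sup>+\<omega>. X \<omega> * Y \<omega> \<partial>M) = (\<integral>\<^sup>+\<omega>. X \<omega> \<partial>M) * (\<integral>\<^sup>+\<omega>. Y \<omega> \<partial>M)"
proof -
  have i: "indep_vars (\<lambda>_. borel) (case_bool X Y) UNIV"
    using assms unfolding indep_var_def
    by (rule indep_vars_cong[THEN iffD1, rotated 3]) (auto split: bool.split)
  have "(\<integral>\<^sup>+\<omega>. (\<Prod>b\<in>UNIV. case_bool X Y b \<omega>) \<partial>M) = (\<Prod>b\<in>UNIV. \<integral>\<^sup>+\<omega>. case_bool X Y b \<omega> \<partial>M)"
    by (rule indep_vars_nn_integral[OF _ i]) auto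
  then show ?thesis by (simp add: UNIV_bool mult.commute)
qed

definition ep :: "ennreal \<Rightarrow> ennreal" where
  "ep x = ennreal (exp (\<alpha> * enn2real x))"

lemma ep_meas[measurable]: "ep \<in> borel_measurable borel"
  unfolding ep_def by measurable

lemma exp_neg_meas[measurable]: "exp_neg a \<in> borel_measurable borel"
  unfolding exp_neg_def by measurable

definition \<beta> :: "nat \<Rightarrow> ennreal" where
  "\<beta> i = (\<integral>\<^sup>+\<omega>. exp_neg \<alpha> (Xf [] i \<omega>) \<partial>M)"

definition d :: "nat \<Rightarrow> ennreal" where
  "d i = (\<integral>\<^sup>+\<omega>. ep (Xf [] i \<omega>) \<partial>M)"

lemma c_eq:
  assumes i: "1 \<le> i"
  shows "(\<integral>\<^sup>+\<omega>. ennreal (exp (\<alpha> * (enn2real (Xp i \<omega>) - enn2real (Xf [] i \<omega>)))) \<partial>M) = d i * \<beta> i"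
proof -
  have "(\<integral>\<^sup>+\<omega>. ennreal (exp (\<alpha> * (enn2real (Xp i \<omega>) - enn2real (Xf [] i \<omega>)))) \<partial>M)
      = (\<integral>\<^sup>+\<omega>. exp_neg \<alpha> (Xf [] i \<omega>) * ep (Xp i \<omega>) \<partial>M)"
  proof (rule nn_integral_cong_AE)
    show "AE \<omega> in M. ennreal (exp (\<alpha> * (enn2real (Xp i \<omega>) - enn2real (Xf [] i \<omega>)))) = exp_neg \<alpha> (Xf [] i \<omega>) * ep (Xp i \<omega>)"
      using A2[OF i]
    proof eventually_elim
      case (elim \<omega>)
      then show ?case
        by (simp add: exp_neg_def ep_def ennreal_mult'[symmetric] right_diff_distrib exp_diff exp_minus divide_inverse mult.commute)
    qed
  qed
  also have "\<dots> = (\<integral>\<^sup>+\<omega>. exp_neg \<alpha> (Xf [] i \<omega>) \<partial>M) * (\<integral>\<^sup>+\<omega>. ep (Xp i \<omega>) \<partial>M)"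
  proof (rule indep_var_nn_mult)
    have "indep_var borel ((\<lambda>f. exp_neg \<alpha> (f i)) \<circ> (\<lambda>\<omega>. restrict (\<lambda>j. Xf [] j \<omega>) {1..}))
                     borel ((\<lambda>f. ep (f i)) \<circ> (\<lambda>\<omega>. restrict (\<lambda>j. Xp j \<omega>) {1..}))"
      by (rule indep_var_compose[OF indep_p]) (use i in \<open>auto intro!: measurable_compose[OF measurable_component_singleton]\<close>)
    then show "indep_var borel (\<lambda>\<omega>. exp_neg \<alpha> (Xf [] i \<omega>)) borel (\<lambda>\<omega>. ep (Xp i \<omega>))"
      using i by (simp add: comp_def)
  qed
  also have "(\<integral>\<^sup>+\<omega>. ep (Xp i \<omega>) \<partial>M) = d i"
  proof -
    have "(\<integral>\<^sup>+\<omega>. ep (Xp i \<omega>) \<partial>M) = (\<integral>\<^sup>+y. ep y \<partial>distr M borel (Xp i))"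
      by (subst nn_integral_distr) auto
    also have "\<dots> = (\<integral>\<^sup>+y. ep y \<partial>distr M borel (Xf [] i))" using distr_Xp[OF i] by simp
    also have "\<dots> = d i" unfolding d_def by (subst nn_integral_distr) auto
    finally show ?thesis .
  qed
  finally show ?thesis by (simp add: \<beta>_def mult.commute)
qed

lemma d_ge1: "1 \<le> d i"
proof -
  have "(\<integral>\<^sup>+\<omega>. 1 \<partial>M) \<le> d i"
    unfolding d_def using alpha by (intro nn_integral_mono) (auto simp: ep_def)
  then show ?thesis by (simp add: emeasure_space_1)
qed

lemma beta_le1: "\<beta> i \<le> 1"
proof -
  have "\<beta> i \<le> (\<integral>\<^sup>+\<omega>. 1 \<partial>M)"
    unfolding \<beta>_def using alpha by (intro nn_integral_mono) (auto simp: exp_neg_le1)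
  then show ?thesis by (simp add: emeasure_space_1)
qed

lemma beta_pos: assumes "1 \<le> i" shows "\<beta> i \<noteq> 0"
proof
  assume "\<beta> i = 0"
  then have "AE \<omega> in M. exp_neg \<alpha> (Xf [] i \<omega>) = 0"
    unfolding \<beta>_def by (subst nn_integral_0_iff_AE[symmetric]) auto
  with A2[OF assms] have "AE \<omega> in M. False"
    by eventually_elim (auto simp: exp_neg_def ennreal_eq_0_iff split: if_splits)
  then show False by (simp add: AE_False)
qed

lemma amgm: fixes t a :: real assumes "t > 0" shows "2 \<le> t * exp a + (1 / t) * exp (- a)"
proof -
  define s where "s = t * exp a"
  have s: "s > 0" using assms by (simp add: s_def)
  have "(1 / t) * exp (- a) = 1 / s" by (simp add: s_def exp_minus field_simps)
  moreover have "2 \<le> s + 1 / s"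
  proof -
    have "0 \<le> (s - 1)^2" by simp
    then have "2 * s \<le> s * s + 1" by (simp add: power2_eq_square algebra_simps)
    then show ?thesis using s by (simp add: field_simps)
  qed
  ultimately show ?thesis by (simp add: s_def)
qed

lemma c_ge1: assumes i: "1 \<le> i" shows "1 \<le> d i * \<beta> i"
proof (cases "d i = \<infinity>")
  case True then show ?thesis using beta_pos[OF i] by (simp add: ennreal_mult_top)
next
  case False
  obtain dr where dr: "d i = ennreal dr" "dr \<ge> 0" using False by (cases "d i") auto
  obtain br where br: "\<beta> i = ennreal br" "br \<ge> 0" using beta_le1[of i] by (cases "\<beta> i") (auto simp: top_unique)
  have dr1: "dr \<ge> 1" using d_ge1[of i] dr ennreal_le_iff[OF dr(2), of 1] by simp
  have brp: "br > 0" using beta_pos[OF i] br by auto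
  have key: "2 \<le> t * dr + (1 / t) * br" if t: "t > 0" for t
  proof -
    have "(\<integral>\<^sup>+\<omega>. 2 \<partial>M) \<le> (\<integral>\<^sup>+\<omega>. ennreal t * ep (Xf [] i \<omega>) + ennreal (1 / t) * exp_neg \<alpha> (Xf [] i \<omega>) \<partial>M)"
    proof (rule nn_integral_mono_AE)
      show "AE \<omega> in M. 2 \<le> ennreal t * ep (Xf [] i \<omega>) + ennreal (1 / t) * exp_neg \<alpha> (Xf [] i \<omega>)"
        using A2[OF i]
      proof eventually_elim
        case (elim \<omega>)
        have "2 \<le> t * exp (\<alpha> * enn2real (Xf [] i \<omega>)) + (1 / t) * exp (- (\<alpha> * enn2real (Xf [] i \<omega>)))"
          by (rule amgm[OF t])
        then have "ennreal 2 \<le> ennreal (t * exp (\<alpha> * enn2real (Xf [] i \<omega>)) + (1 / t) * exp (- (\<alpha> * enn2real (Xf [] i \<omega>))))"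
          by (simp del: ennreal_numeral)
        then show ?case using elim t
          by (simp add: ep_def exp_neg_def ennreal_mult'[symmetric] ennreal_plus[symmetric] less_top[symmetric] del: ennreal_plus ennreal_numeral)
      qed
    qed
    also have "\<dots> = ennreal t * d i + ennreal (1 / t) * \<beta> i"
      by (simp add: nn_integral_add nn_integral_cmult d_def \<beta>_def)
    also have "\<dots> = ennreal (t * dr) + ennreal ((1 / t) * br)"
      using t dr br by (simp add: ennreal_mult'[symmetric])
    also have "\<dots> = ennreal (t * dr + (1 / t) * br)"
      using t dr br by (intro ennreal_plus[symmetric]) auto
    finally have "ennreal 2 \<le> ennreal (t * dr + (1 / t) * br)"
      by (simp add: emeasure_space_1)
    then show ?thesis
      using t dr br by (subst (asm) ennreal_le_iff) auto
  qed
  define a where "a = sqrt br"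
  define b where "b = sqrt dr"
  have ab: "a > 0" "b > 0" "a * a = br" "b * b = dr"
    using brp dr1 by (auto simp: a_def b_def)
  define t where "t = a / b"
  have t: "t > 0" using ab by (simp add: t_def)
  have "t * dr = a * b"
    using ab(1,2) by (simp add: t_def field_simps flip: ab(4))
  moreover have "(1 / t) * br = a * b"
    using ab(1,2) by (simp add: t_def field_simps flip: ab(3))
  ultimately have "1 \<le> a * b" using key[OF t] by simp
  then have "1 \<le> (a * b) * (a * b)" using mult_mono[of 1 "a*b" 1 "a*b"] by simp
  then have "1 \<le> br * dr" by (simp add: algebra_simps flip: ab(3) ab(4))
  then show ?thesis using dr br by (simp add: ennreal_mult'[symmetric] mult.commute)
qed

end



context cmj begin

definition PC :: "nat list \<Rightarrow> nat \<Rightarrow> nat list \<Rightarrow> (nat list \<times> nat) set" where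
  "PC u k w = pc (u @ [k]) (w @ [k])"

definition Hx :: "nat list \<Rightarrow> nat \<Rightarrow> nat list \<Rightarrow> nat \<Rightarrow> (nat list \<times> nat \<Rightarrow> ennreal) \<Rightarrow> bool" where
  "Hx u k w j \<xi> \<longleftrightarrow> (\<Sum>x\<in>PC u k w. \<xi> x) + (\<Sum>i\<in>{k+1..k+j}. \<xi> (u @ k # w, i)) \<le> (\<Sum>i\<in>{k+1..k+j}. \<xi> (u, i))"

definition Ex :: "nat list \<Rightarrow> nat \<Rightarrow> nat list \<Rightarrow> nat \<Rightarrow> (nat list \<times> nat \<Rightarrow> ennreal) \<Rightarrow> bool" where
  "Ex u k w N \<xi> \<longleftrightarrow> (\<exists>j\<in>{1..N}. Hx u k w j \<xi>)"

definition JJ :: "nat list \<Rightarrow> nat \<Rightarrow> nat list \<Rightarrow> nat \<Rightarrow> (nat list \<times> nat) set" where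
  "JJ u k w N = PC u k w \<union> ({u} \<times> {k+1..k+N}) \<union> ({u @ k # w} \<times> {k+1..k+N})"

definition gg :: "nat list \<Rightarrow> nat list \<times> nat \<Rightarrow> ennreal \<Rightarrow> ennreal" where
  "gg u x = (if fst x = u then ep else exp_neg \<alpha>)"

definition Wx :: "nat list \<Rightarrow> nat \<Rightarrow> nat list \<Rightarrow> nat \<Rightarrow> (nat list \<times> nat \<Rightarrow> ennreal) \<Rightarrow> ennreal" where
  "Wx u k w N \<xi> = (\<Prod>x\<in>JJ u k w N. gg u x (\<xi> x))"

lemma gg_meas[measurable]: "gg u x \<in> borel_measurable borel"
  unfolding gg_def by auto

lemma finite_PC[simp]: "finite (PC u k w)" by (simp add: PC_def)
lemma finite_JJ[simp]: "finite (JJ u k w N)" by (simp add: JJ_def)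

lemma PC_eq: "PC u k w = pc (u @ [k]) w \<union> ({u @ k # w} \<times> {1..k})"
  by (simp add: PC_def pc_snoc)

lemma PC_len: "x \<in> PC u k w \<Longrightarrow> length u < length (fst x)"
  unfolding PC_def using pc_len[of x "u @ [k]" "w @ [k]"] by auto

lemma PC_u: "(u, i) \<notin> PC u k w"
  using PC_len by fastforce

lemma PC_p: "i > k \<Longrightarrow> (u @ k # w, i) \<notin> PC u k w"
  unfolding PC_eq using pc_len[of _ "u @ [k]" w] by fastforce

lemma PC_IDX: "u \<in> UH \<Longrightarrow> 1 \<le> k \<Longrightarrow> w \<in> UH \<Longrightarrow> PC u k w \<subseteq> IDX"
  unfolding PC_def IDX_def by (rule pc_UH) (auto simp: UH_def)

lemma JJ_IDX: "u \<in> UH \<Longrightarrow> 1 \<le> k \<Longrightarrow> w \<in> UH \<Longrightarrow> JJ u k w N \<subseteq> IDX"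
  using PC_IDX[of u k w] by (auto simp: JJ_def IDX_def UH_def)

lemma JJ_Suc: "JJ u k w (Suc N) = JJ u k w N \<union> {(u, k + Suc N), (u @ k # w, k + Suc N)}"
  by (auto simp: JJ_def)

lemma JJ_new: "(u, k + Suc N) \<notin> JJ u k w N" "(u @ k # w, k + Suc N) \<notin> JJ u k w N"
  using PC_u PC_p by (auto simp: JJ_def)

lemma Hx_local:
  assumes "j \<le> N" "\<And>x. x \<in> JJ u k w N \<Longrightarrow> \<xi> x = \<xi>' x"
  shows "Hx u k w j \<xi> = Hx u k w j \<xi>'"
proof -
  have "(\<Sum>x\<in>PC u k w. \<xi> x) = (\<Sum>x\<in>PC u k w. \<xi>' x)"
    using assms(2) by (intro sum.cong) (auto simp: JJ_def)
  moreover have "(\<Sum>i\<in>{k+1..k+j}. \<xi> (u @ k # w, i)) = (\<Sum>i\<in>{k+1..k+j}. \<xi>' (u @ k # w, i))"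
    using assms by (intro sum.cong) (auto simp: JJ_def)
  moreover have "(\<Sum>i\<in>{k+1..k+j}. \<xi> (u, i)) = (\<Sum>i\<in>{k+1..k+j}. \<xi>' (u, i))"
    using assms by (intro sum.cong) (auto simp: JJ_def)
  ultimately show ?thesis by (simp add: Hx_def)
qed

lemma Ex_local:
  assumes "\<And>x. x \<in> JJ u k w N \<Longrightarrow> \<xi> x = \<xi>' x"
  shows "Ex u k w N \<xi> = Ex u k w N \<xi>'"
proof -
  have "\<forall>j\<in>{1..N}. Hx u k w j \<xi> = Hx u k w j \<xi>'"
    using Hx_local[of _ N u k w \<xi> \<xi>'] assms by auto
  then show ?thesis unfolding Ex_def by auto
qed

lemma Wx_local:
  assumes "\<And>x. x \<in> JJ u k w N \<Longrightarrow> \<xi> x = \<xi>' x"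
  shows "Wx u k w N \<xi> = Wx u k w N \<xi>'"
  unfolding Wx_def using assms by (intro prod.cong) auto

lemma Ex_Suc: "Ex u k w (Suc N) \<xi> \<longleftrightarrow> Ex u k w N \<xi> \<or> Hx u k w (Suc N) \<xi>"
proof -
  have "{1..Suc N} = insert (Suc N) {1..N}" by auto
  then show ?thesis unfolding Ex_def by auto
qed

lemma Ex_0: "\<not> Ex u k w 0 \<xi>"
  unfolding Ex_def by auto

lemma Wx_Suc: "Wx u k w (Suc N) \<xi> = Wx u k w N \<xi> * (\<Prod>x\<in>{(u, k + Suc N), (u @ k # w, k + Suc N)}. gg u x (\<xi> x))"
  unfolding Wx_def JJ_Suc using JJ_new(1)[of u k N w] JJ_new(2)[of u k w N]
  by (subst prod.union_disjoint) auto

lemma sum_PiM_meas: "(\<lambda>\<xi>. \<Sum>x\<in>S. \<xi> (h x)) \<in> borel_measurable (PiM J (\<lambda>_. borel :: ennreal measure))"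
  by (intro borel_measurable_sum eval_PiM_meas)

lemma Hx_PiM_meas: "{\<xi> \<in> space (PiM J (\<lambda>_. borel)). Hx u k w j \<xi>} \<in> sets (PiM J (\<lambda>_. borel))"
  unfolding Hx_def
  by (intro borel_measurable_le borel_measurable_add sum_PiM_meas[where h="\<lambda>x. x", simplified] sum_PiM_meas)

lemma Ex_PiM_meas: "(\<lambda>\<xi>. if Ex u k w N \<xi> then Wx u k w N \<xi> else 0) \<in> borel_measurable (PiM J (\<lambda>_. borel))"
proof (rule measurable_If)
  show "(\<lambda>\<xi>. Wx u k w N \<xi>) \<in> borel_measurable (PiM J (\<lambda>_. borel))"
    unfolding Wx_def by (intro borel_measurable_prod_ennreal measurable_compose[OF eval_PiM_meas gg_meas])
  show "(\<lambda>_. 0) \<in> borel_measurable (PiM J (\<lambda>_. borel))" by simp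
  have "{\<xi> \<in> space (PiM J (\<lambda>_. borel)). Ex u k w N \<xi>} = (\<Union>j\<in>{1..N}. {\<xi> \<in> space (PiM J (\<lambda>_. borel)). Hx u k w j \<xi>})"
    by (auto simp: Ex_def)
  also have "\<dots> \<in> sets (PiM J (\<lambda>_. borel))"
    by (intro sets.finite_UN Hx_PiM_meas) auto
  finally show "{\<xi> \<in> space (PiM J (\<lambda>_. borel)). Ex u k w N \<xi>} \<in> sets (PiM J (\<lambda>_. borel))" .
qed

lemma Ex_M_meas[measurable]: "{\<omega>\<in>space M. Ex u k w N (\<lambda>x. F x \<omega>)} \<in> sets M"
  unfolding Ex_def Hx_def by measurable

lemma Hx_M_meas[measurable]: "{\<omega>\<in>space M. Hx u k w N (\<lambda>x. F x \<omega>)} \<in> sets M"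
  unfolding Hx_def by measurable

lemma Wx_M_meas[measurable]: "(\<lambda>\<omega>. Wx u k w N (\<lambda>x. F x \<omega>)) \<in> borel_measurable M"
  unfolding Wx_def by measurable

end



lemma sum_single_times: "(\<Sum>x\<in>{q} \<times> A. f x) = (\<Sum>i\<in>A. f (q, i))"
proof -
  have "{q} \<times> A = (\<lambda>i. (q, i)) ` A" by auto
  then show ?thesis by (simp add: sum.reindex inj_on_def)
qed

lemma prod_single_times: "(\<Prod>x\<in>{q} \<times> A. f x) = (\<Prod>i\<in>A. f (q, i))"
proof -
  have "{q} \<times> A = (\<lambda>i. (q, i)) ` A" by auto
  then show ?thesis by (simp add: prod.reindex inj_on_def)
qed

context cmj begin

lemma u_ne_p: "u \<noteq> u @ k # w" by simp

lemma JJ_disj: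
  "PC u k w \<inter> ({u} \<times> {k+1..k+N}) = {}"
  "(PC u k w \<union> ({u} \<times> {k+1..k+N})) \<inter> ({u @ k # w} \<times> {k+1..k+N}) = {}"
  by (auto simp: PC_u PC_p)

lemma W_ge1:
  assumes fin: "\<forall>x\<in>IDX. F x \<omega> < \<infinity>" and u: "u \<in> UH" and k: "1 \<le> k" and w: "w \<in> UH"
    and H: "Hx u k w j (\<lambda>x. F x \<omega>)"
  shows "1 \<le> Wx u k w j (\<lambda>x. F x \<omega>)"
proof -
  define r where "r x = enn2real (F x \<omega>)" for x
  define A where "A = {k+1..k+j}"
  define q where "q = u @ k # w"
  have JI: "JJ u k w j \<subseteq> IDX" by (rule JJ_IDX[OF u k w])
  have PI: "PC u k w \<subseteq> IDX" by (rule PC_IDX[OF u k w])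
  have uI: "(u, i) \<in> IDX" if "i \<in> A" for i using that u by (auto simp: A_def IDX_def)
  have qI: "(q, i) \<in> IDX" if "i \<in> A" for i using that u w k by (auto simp: A_def IDX_def q_def UH_def)
  have Fr: "F x \<omega> = ennreal (r x)" if "x \<in> IDX" for x
    using fin that by (auto simp: r_def less_top[symmetric])
  have r0: "r x \<ge> 0" for x by (simp add: r_def)
  have s1: "(\<Sum>x\<in>PC u k w. F x \<omega>) = ennreal (\<Sum>x\<in>PC u k w. r x)"
  proof -
    have "(\<Sum>x\<in>PC u k w. F x \<omega>) = (\<Sum>x\<in>PC u k w. ennreal (r x))"
      using PI Fr by (intro sum.cong) auto
    then show ?thesis by (simp add: r0)
  qed
  have s2: "(\<Sum>i\<in>A. F (q, i) \<omega>) = ennreal (\<Sum>i\<in>A. r (q, i))"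
  proof -
    have "(\<Sum>i\<in>A. F (q, i) \<omega>) = (\<Sum>i\<in>A. ennreal (r (q, i)))"
      using qI Fr by (intro sum.cong) auto
    then show ?thesis by (simp add: r0)
  qed
  have s3: "(\<Sum>i\<in>A. F (u, i) \<omega>) = ennreal (\<Sum>i\<in>A. r (u, i))"
  proof -
    have "(\<Sum>i\<in>A. F (u, i) \<omega>) = (\<Sum>i\<in>A. ennreal (r (u, i)))"
      using uI Fr by (intro sum.cong) auto
    then show ?thesis by (simp add: r0)
  qed
  from H have "ennreal (\<Sum>x\<in>PC u k w. r x) + ennreal (\<Sum>i\<in>A. r (q, i)) \<le> ennreal (\<Sum>i\<in>A. r (u, i))"
    unfolding Hx_def A_def[symmetric] q_def[symmetric] s1 s2 s3 .
  then have "ennreal ((\<Sum>x\<in>PC u k w. r x) + (\<Sum>i\<in>A. r (q, i))) \<le> ennreal (\<Sum>i\<in>A. r (u, i))"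
    using r0 by (subst ennreal_plus) (auto intro!: sum_nonneg)
  then have ineq: "(\<Sum>x\<in>PC u k w. r x) + (\<Sum>i\<in>A. r (q, i)) \<le> (\<Sum>i\<in>A. r (u, i))"
    using r0 by (subst (asm) ennreal_le_iff) (auto intro!: sum_nonneg)
  define s where "s x = (if fst x = u then \<alpha> * r x else - (\<alpha> * r x))" for x
  have gs: "gg u x (F x \<omega>) = ennreal (exp (s x))" if "x \<in> IDX" for x
    using Fr[OF that] r0[of x]
    by (auto simp: gg_def s_def ep_def exp_neg_def r_def)
  have "Wx u k w j (\<lambda>x. F x \<omega>) = (\<Prod>x\<in>JJ u k w j. ennreal (exp (s x)))"
    unfolding Wx_def using JI gs by (intro prod.cong) auto
  also have "\<dots> = ennreal (exp (\<Sum>x\<in>JJ u k w j. s x))"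
    by (subst prod_ennreal) (auto simp: exp_sum)
  also have "(\<Sum>x\<in>JJ u k w j. s x) = (\<Sum>x\<in>PC u k w. s x) + (\<Sum>x\<in>{u} \<times> A. s x) + (\<Sum>x\<in>{q} \<times> A. s x)"
    unfolding JJ_def A_def q_def using JJ_disj[of u k w j]
    by (simp add: sum.union_disjoint)
  also have "(\<Sum>x\<in>PC u k w. s x) = - \<alpha> * (\<Sum>x\<in>PC u k w. r x)"
    by (auto simp: s_def sum_distrib_left PC_u intro!: sum.cong)
  also have "(\<Sum>x\<in>{u} \<times> A. s x) = \<alpha> * (\<Sum>i\<in>A. r (u, i))"
    by (simp add: sum_single_times s_def sum_distrib_left)
  also have "(\<Sum>x\<in>{q} \<times> A. s x) = - \<alpha> * (\<Sum>i\<in>A. r (q, i))"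
    by (simp add: sum_single_times s_def sum_distrib_left q_def sum_negf)
  finally have W: "Wx u k w j (\<lambda>x. F x \<omega>) = ennreal (exp (\<alpha> * ((\<Sum>i\<in>A. r (u, i)) - (\<Sum>x\<in>PC u k w. r x) - (\<Sum>i\<in>A. r (q, i)))))"
    by (simp add: algebra_simps)
  have "0 \<le> \<alpha> * ((\<Sum>i\<in>A. r (u, i)) - (\<Sum>x\<in>PC u k w. r x) - (\<Sum>i\<in>A. r (q, i)))"
    using ineq alpha by (intro mult_nonneg_nonneg) auto
  then show ?thesis unfolding W by simp
qed

lemma claimB:
  assumes u: "u \<in> UH" and k: "1 \<le> k" and w: "w \<in> UH"
  shows "(\<integral>\<^sup>+\<omega>. Wx u k w N (\<lambda>x. F x \<omega>) \<partial>M) = (\<Prod>x\<in>PC u k w. \<beta> (snd x)) * (\<Prod>i\<in>{k+1..k+N}. d i * \<beta> i)"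
proof -
  define A where "A = {k+1..k+N}"
  define q where "q = u @ k # w"
  have JI: "JJ u k w N \<subseteq> IDX" by (rule JJ_IDX[OF u k w])
  have gi: "(\<integral>\<^sup>+\<omega>. gg u x (F x \<omega>) \<partial>M) = (if fst x = u then d (snd x) else \<beta> (snd x))" if "x \<in> IDX" for x
    using integral_F[OF that] by (simp add: gg_def d_def \<beta>_def)
  have "(\<integral>\<^sup>+\<omega>. Wx u k w N (\<lambda>x. F x \<omega>) \<partial>M) = (\<Prod>x\<in>JJ u k w N. \<integral>\<^sup>+\<omega>. gg u x (F x \<omega>) \<partial>M)"
    unfolding Wx_def by (rule indep_prod[OF finite_JJ JI]) simp
  also have "\<dots> = (\<Prod>x\<in>JJ u k w N. (if fst x = u then d (snd x) else \<beta> (snd x)))"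
    using JI gi by (intro prod.cong) auto
  also have "\<dots> = (\<Prod>x\<in>PC u k w. (if fst x = u then d (snd x) else \<beta> (snd x)))
      * (\<Prod>x\<in>{u} \<times> A. (if fst x = u then d (snd x) else \<beta> (snd x)))
      * (\<Prod>x\<in>{q} \<times> A. (if fst x = u then d (snd x) else \<beta> (snd x)))"
    unfolding JJ_def A_def q_def using JJ_disj[of u k w N]
    by (simp add: prod.union_disjoint)
  also have "(\<Prod>x\<in>PC u k w. (if fst x = u then d (snd x) else \<beta> (snd x))) = (\<Prod>x\<in>PC u k w. \<beta> (snd x))"
    using PC_len[of _ u k w] by (intro prod.cong) auto
  also have "(\<Prod>x\<in>{u} \<times> A. (if fst x = u then d (snd x) else \<beta> (snd x))) = (\<Prod>i\<in>A. d i)"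
    by (simp add: prod_single_times)
  also have "(\<Prod>x\<in>{q} \<times> A. (if fst x = u then d (snd x) else \<beta> (snd x))) = (\<Prod>i\<in>A. \<beta> i)"
    by (simp add: prod_single_times q_def)
  finally show ?thesis by (simp add: A_def prod.distrib mult.assoc)
qed

end



context cmj begin

lemma first_step:
  assumes u: "u \<in> UH" and k: "1 \<le> k" and w: "w \<in> UH"
  shows "(\<integral>\<^sup>+\<omega>. (if Ex u k w N (\<lambda>x. F x \<omega>) then Wx u k w (Suc N) (\<lambda>x. F x \<omega>) else 0) \<partial>M)
       = (\<integral>\<^sup>+\<omega>. (if Ex u k w N (\<lambda>x. F x \<omega>) then Wx u k w N (\<lambda>x. F x \<omega>) else 0) \<partial>M) * (d (k + Suc N) * \<beta> (k + Suc N))"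
proof -
  define f where "f \<xi> = (if Ex u k w N \<xi> then Wx u k w N \<xi> else 0)" for \<xi>
  define J1 where "J1 = JJ u k w N"
  define J2 where "J2 = {(u, k + Suc N), (u @ k # w, k + Suc N)}"
  have fr: "f (restrict (\<lambda>x. F x \<omega>) J1) = f (\<lambda>x. F x \<omega>)" for \<omega>
  proof -
    have "\<And>x. x \<in> JJ u k w N \<Longrightarrow> restrict (\<lambda>x. F x \<omega>) J1 x = F x \<omega>" by (simp add: J1_def)
    then show ?thesis unfolding f_def
      using Ex_local[of u k w N "restrict (\<lambda>x. F x \<omega>) J1" "\<lambda>x. F x \<omega>"]
            Wx_local[of u k w N "restrict (\<lambda>x. F x \<omega>) J1" "\<lambda>x. F x \<omega>"] by simp
  qed
  have J2I: "J2 \<subseteq> IDX" using u k w by (auto simp: J2_def IDX_def UH_def)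
  have disj: "J1 \<inter> J2 = {}" using JJ_new(1)[of u k N w] JJ_new(2)[of u k w N] by (auto simp: J1_def J2_def)
  have "(\<integral>\<^sup>+\<omega>. f (restrict (\<lambda>x. F x \<omega>) J1) * (\<Prod>x\<in>J2. gg u x (F x \<omega>)) \<partial>M)
      = (\<integral>\<^sup>+\<omega>. f (restrict (\<lambda>x. F x \<omega>) J1) \<partial>M) * (\<Prod>x\<in>J2. \<integral>\<^sup>+\<omega>. gg u x (F x \<omega>) \<partial>M)"
    by (rule indep_fact) (use J2I disj JJ_IDX[OF u k w] in \<open>auto simp: J1_def J2_def f_def intro: Ex_PiM_meas\<close>)
  moreover have "f (restrict (\<lambda>x. F x \<omega>) J1) * (\<Prod>x\<in>J2. gg u x (F x \<omega>)) = (if Ex u k w N (\<lambda>x. F x \<omega>) then Wx u k w (Suc N) (\<lambda>x. F x \<omega>) else 0)" for \<omega>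
    unfolding fr by (simp add: f_def Wx_Suc J2_def)
  moreover have "(\<Prod>x\<in>J2. \<integral>\<^sup>+\<omega>. gg u x (F x \<omega>) \<partial>M) = d (k + Suc N) * \<beta> (k + Suc N)"
  proof -
    have "(\<Prod>x\<in>J2. \<integral>\<^sup>+\<omega>. gg u x (F x \<omega>) \<partial>M) = (\<integral>\<^sup>+\<omega>. ep (F (u, k + Suc N) \<omega>) \<partial>M) * (\<integral>\<^sup>+\<omega>. exp_neg \<alpha> (F (u @ k # w, k + Suc N) \<omega>) \<partial>M)"
      by (simp add: J2_def gg_def)
    also have "(\<integral>\<^sup>+\<omega>. ep (F (u, k + Suc N) \<omega>) \<partial>M) = d (k + Suc N)"
      using J2I by (subst integral_F) (auto simp: J2_def d_def)
    also have "(\<integral>\<^sup>+\<omega>. exp_neg \<alpha> (F (u @ k # w, k + Suc N) \<omega>) \<partial>M) = \<beta> (k + Suc N)"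
      using J2I by (subst integral_F) (auto simp: J2_def \<beta>_def)
    finally show ?thesis .
  qed
  ultimately show ?thesis unfolding fr by (simp add: f_def)
qed

lemma claimA:
  assumes u: "u \<in> UH" and k: "1 \<le> k" and w: "w \<in> UH"
  shows "emeasure M {\<omega>\<in>space M. Ex u k w N (\<lambda>x. F x \<omega>)} \<le> (\<integral>\<^sup>+\<omega>. (if Ex u k w N (\<lambda>x. F x \<omega>) then Wx u k w N (\<lambda>x. F x \<omega>) else 0) \<partial>M)"
proof (induction N)
  case 0 then show ?case by (simp add: Ex_0)
next
  case (Suc N)
  define E where "E = {\<omega>\<in>space M. Ex u k w N (\<lambda>x. F x \<omega>)}"
  define H where "H = {\<omega>\<in>space M. \<not> Ex u k w N (\<lambda>x. F x \<omega>) \<and> Hx u k w (Suc N) (\<lambda>x. F x \<omega>)}"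
  have Es[measurable]: "E \<in> sets M" unfolding E_def by measurable
  have Hs[measurable]: "H \<in> sets M" unfolding H_def by measurable
  have EH: "{\<omega>\<in>space M. Ex u k w (Suc N) (\<lambda>x. F x \<omega>)} = E \<union> H"
    by (auto simp: E_def H_def Ex_Suc)
  let ?I = "\<lambda>N'. (\<integral>\<^sup>+\<omega>. (if Ex u k w N (\<lambda>x. F x \<omega>) then Wx u k w N' (\<lambda>x. F x \<omega>) else 0) \<partial>M)"
  have m1: "emeasure M (E \<union> H) = emeasure M E + emeasure M H"
    by (rule plus_emeasure[symmetric]) (auto simp: E_def H_def)
  have m2: "emeasure M E \<le> ?I N"
    using Suc.IH by (simp add: E_def)
  have m3: "?I N \<le> ?I N * (d (k + Suc N) * \<beta> (k + Suc N))"
    using mult_left_mono[OF c_ge1[of "k + Suc N"], of "?I N"] by simp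
  have m4: "?I N * (d (k + Suc N) * \<beta> (k + Suc N)) = ?I (Suc N)"
    by (rule first_step[OF u k w, symmetric])
  have m5: "emeasure M H \<le> (\<integral>\<^sup>+\<omega>. Wx u k w (Suc N) (\<lambda>x. F x \<omega>) * indicator H \<omega> \<partial>M)"
  proof -
    have "emeasure M H = (\<integral>\<^sup>+\<omega>. indicator H \<omega> \<partial>M)" by simp
    also have "\<dots> \<le> (\<integral>\<^sup>+\<omega>. Wx u k w (Suc N) (\<lambda>x. F x \<omega>) * indicator H \<omega> \<partial>M)"
    proof (rule nn_integral_mono_AE)
      show "AE \<omega> in M. indicator H \<omega> \<le> Wx u k w (Suc N) (\<lambda>x. F x \<omega>) * indicator H \<omega>"
        using AE_F_fin
      proof eventually_elim
        case (elim \<omega>)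
        show ?case
        proof (cases "\<omega> \<in> H")
          case True
          then have "Hx u k w (Suc N) (\<lambda>x. F x \<omega>)" by (simp add: H_def)
          then have "1 \<le> Wx u k w (Suc N) (\<lambda>x. F x \<omega>)" by (rule W_ge1[OF elim u k w])
          then show ?thesis using True by simp
        qed simp
      qed
    qed
    finally show ?thesis .
  qed
  have m6: "?I (Suc N) + (\<integral>\<^sup>+\<omega>. Wx u k w (Suc N) (\<lambda>x. F x \<omega>) * indicator H \<omega> \<partial>M)
           = (\<integral>\<^sup>+\<omega>. (if Ex u k w N (\<lambda>x. F x \<omega>) then Wx u k w (Suc N) (\<lambda>x. F x \<omega>) else 0)
                  + Wx u k w (Suc N) (\<lambda>x. F x \<omega>) * indicator H \<omega> \<partial>M)"
    by (rule nn_integral_add[symmetric]) (auto simp: Ex_def Hx_def)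
  have m7: "(\<integral>\<^sup>+\<omega>. (if Ex u k w N (\<lambda>x. F x \<omega>) then Wx u k w (Suc N) (\<lambda>x. F x \<omega>) else 0)
                  + Wx u k w (Suc N) (\<lambda>x. F x \<omega>) * indicator H \<omega> \<partial>M)
      = (\<integral>\<^sup>+\<omega>. (if Ex u k w (Suc N) (\<lambda>x. F x \<omega>) then Wx u k w (Suc N) (\<lambda>x. F x \<omega>) else 0) \<partial>M)"
    by (rule nn_integral_cong) (auto simp: H_def Ex_Suc indicator_def)
  have "emeasure M E + emeasure M H \<le> ?I (Suc N) + (\<integral>\<^sup>+\<omega>. Wx u k w (Suc N) (\<lambda>x. F x \<omega>) * indicator H \<omega> \<partial>M)"
    using m2 m3 m4 m5 by (intro add_mono) auto
  then show ?case unfolding EH m1 m6 m7 .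
qed

end



lemma prod_sub_ge1:
  fixes f :: "nat \<Rightarrow> ennreal"
  assumes "finite B" "A \<subseteq> B" "\<And>i. i \<in> B \<Longrightarrow> 1 \<le> f i"
  shows "prod f A \<le> prod f B"
proof -
  have "prod f B = prod f A * prod f (B - A)"
    using assms by (simp add: prod.subset_diff mult.commute)
  moreover have "1 \<le> prod f (B - A)" using assms by (intro prod_ge_1) auto
  ultimately show ?thesis using mult_left_mono[of 1 "prod f (B - A)" "prod f A"] by simp
qed

context cmj begin

lemma catches_meas[measurable]: "{\<omega>\<in>space M. catches_up Xf u v \<omega>} \<in> sets M"
  unfolding catches_up_def birth_def birth_aux_sum by measurable

lemma birth_single: "birth_aux Xf \<omega> q [m] = (\<Sum>i\<in>{1..m}. Xf q i \<omega>)"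
  by simp

lemma catches_Ex:
  assumes fin: "\<forall>x\<in>IDX. F x \<omega> < \<infinity>" and u: "u \<in> UH" and k: "1 \<le> k" and w: "w \<in> UH"
    and c: "catches_up Xf u (k # w) \<omega>"
  shows "\<exists>N. Ex u k w N (\<lambda>x. F x \<omega>)"
proof -
  from c obtain j where j: "j \<ge> 1" "birth Xf (u @ (k # w) @ [k + j]) \<omega> \<le> birth Xf (u @ [k + j]) \<omega>"
    unfolding catches_up_def by auto
  define q where "q = u @ k # w"
  define a0 where "a0 = birth_aux Xf \<omega> [] u + (\<Sum>i\<in>{1..k}. Xf u i \<omega>)"
  define Q where "Q = (\<Sum>x\<in>PC u k w. F x \<omega>)"
  have split: "(\<Sum>i\<in>{1..k+j}. Xf r i \<omega>) = (\<Sum>i\<in>{1..k}. Xf r i \<omega>) + (\<Sum>i\<in>{k+1..k+j}. Xf r i \<omega>)" for r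
    by (rule sum.ub_add_nat) simp
  have split': "(\<Sum>i\<in>{Suc 0..k+j}. Xf r i \<omega>) = (\<Sum>i\<in>{Suc 0..k}. Xf r i \<omega>) + (\<Sum>i\<in>{Suc k..k+j}. Xf r i \<omega>)" for r
    using split[of r] by simp
  have Q: "Q = birth_aux Xf \<omega> (u @ [k]) w + (\<Sum>i\<in>{1..k}. Xf q i \<omega>)"
    unfolding Q_def PC_def F_def birth_aux_sum[symmetric] birth_aux_append q_def by simp
  have b1: "birth Xf (u @ (k # w) @ [k + j]) \<omega> = a0 + (Q + (\<Sum>i\<in>{k+1..k+j}. F (q, i) \<omega>))"
    unfolding birth_def birth_aux_append a0_def Q split[of q]
    by (simp add: q_def birth_aux_append F_def split' add.assoc)
  have b2: "birth Xf (u @ [k + j]) \<omega> = a0 + (\<Sum>i\<in>{k+1..k+j}. F (u, i) \<omega>)"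
    unfolding birth_def birth_aux_append a0_def split[of u]
    by (simp add: F_def split' add.assoc)
  have a0fin: "a0 \<noteq> \<infinity>"
  proof -
    have "pc [] u \<subseteq> IDX" using pc_UH[of "[]" u] u by (auto simp: IDX_def UH_def)
    then have "birth_aux Xf \<omega> [] u \<noteq> \<infinity>"
      unfolding birth_aux_sum using fin by (fastforce simp: F_def less_top[symmetric])
    moreover have "(\<Sum>i\<in>{1..k}. Xf u i \<omega>) \<noteq> \<infinity>"
      using fin u by (fastforce simp: F_def IDX_def less_top[symmetric])
    ultimately show ?thesis by (simp add: a0_def)
  qed
  from j(2) have "Q + (\<Sum>i\<in>{k+1..k+j}. F (q, i) \<omega>) \<le> (\<Sum>i\<in>{k+1..k+j}. F (u, i) \<omega>)"
    unfolding b1 b2 using a0fin by (simp add: ennreal_add_left_cancel_le)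
  then have "Hx u k w j (\<lambda>x. F x \<omega>)" by (simp add: Hx_def Q_def q_def)
  then have "Ex u k w j (\<lambda>x. F x \<omega>)" using j(1) by (auto simp: Ex_def)
  then show ?thesis ..
qed

lemma bound_v:
  assumes u: "u \<in> UH" and k: "1 \<le> k" and w: "w \<in> UH" and Kk: "K \<le> k"
    and Lb: "\<And>n. (\<Prod>i\<in>{K+1..n}. d i * \<beta> i) \<le> Lb"
  shows "emeasure M {\<omega>\<in>space M. catches_up Xf u (k # w) \<omega>} \<le> (\<Prod>x\<in>PC u k w. \<beta> (snd x)) * Lb"
proof -
  define EE where "EE N = {\<omega>\<in>space M. Ex u k w N (\<lambda>x. F x \<omega>)}" for N
  have EEs: "range EE \<subseteq> sets M" by (auto simp: EE_def)
  have inc: "incseq EE"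
    unfolding incseq_def EE_def Ex_def by auto
  have "emeasure M {\<omega>\<in>space M. catches_up Xf u (k # w) \<omega>} \<le> emeasure M (\<Union>N. EE N)"
  proof (rule emeasure_mono_AE)
    show "AE x in M. x \<in> {\<omega> \<in> space M. catches_up Xf u (k # w) \<omega>} \<longrightarrow> x \<in> (\<Union>N. EE N)"
      using AE_F_fin
    proof eventually_elim
      case (elim \<omega>)
      then show ?case using catches_Ex[OF elim u k w] by (auto simp: EE_def)
    qed
    show "(\<Union>N. EE N) \<in> sets M" using EEs by auto
  qed
  also have "\<dots> = (SUP N. emeasure M (EE N))"
    by (rule SUP_emeasure_incseq[OF EEs inc, symmetric])
  also have "\<dots> \<le> (\<Prod>x\<in>PC u k w. \<beta> (snd x)) * Lb"
  proof (rule SUP_least)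
    fix N
    have "emeasure M (EE N) \<le> (\<integral>\<^sup>+\<omega>. (if Ex u k w N (\<lambda>x. F x \<omega>) then Wx u k w N (\<lambda>x. F x \<omega>) else 0) \<partial>M)"
      unfolding EE_def by (rule claimA[OF u k w])
    also have "\<dots> \<le> (\<integral>\<^sup>+\<omega>. Wx u k w N (\<lambda>x. F x \<omega>) \<partial>M)"
      by (intro nn_integral_mono) auto
    also have "\<dots> = (\<Prod>x\<in>PC u k w. \<beta> (snd x)) * (\<Prod>i\<in>{k+1..k+N}. d i * \<beta> i)"
      by (rule claimB[OF u k w])
    also have "(\<Prod>i\<in>{k+1..k+N}. d i * \<beta> i) \<le> (\<Prod>i\<in>{K+1..k+N}. d i * \<beta> i)"
      using Kk K by (intro prod_sub_ge1 c_ge1) auto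
    also have "\<dots> \<le> Lb" by (rule Lb)
    finally show "emeasure M (EE N) \<le> (\<Prod>x\<in>PC u k w. \<beta> (snd x)) * Lb"
      by (simp add: mult_left_mono)
  qed
  finally show ?thesis .
qed

end



lemma infsum_nn_count:
  fixes f :: "'b \<Rightarrow> ennreal"
  assumes A: "countable A"
  shows "infsum f A = (\<integral>\<^sup>+x. f x \<partial>count_space A)"
proof (cases "finite A")
  case True then show ?thesis by (simp add: nn_integral_count_space_finite)
next
  case False
  define g where "g = from_nat_into A"
  have g: "bij_betw g UNIV A" unfolding g_def by (rule bij_betw_from_nat_into[OF A False])
  have "infsum f A = infsum (\<lambda>n. f (g n)) UNIV"
    by (rule infsum_reindex_bij_betw[OF g, symmetric])
  also have "\<dots> = (\<Sum>n. f (g n))"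
  proof -
    have "((\<lambda>n. f (g n)) has_sum infsum (\<lambda>n. f (g n)) UNIV) UNIV"
      by (rule has_sum_infsum) (simp add: nonneg_summable_on_complete)
    then have "(\<lambda>n. f (g n)) sums infsum (\<lambda>n. f (g n)) UNIV" by (rule has_sum_imp_sums)
    then show ?thesis by (simp add: sums_iff)
  qed
  also have "\<dots> = (\<integral>\<^sup>+n. f (g n) \<partial>count_space UNIV)"
    by (rule nn_integral_count_space_nat[symmetric])
  also have "\<dots> = (\<integral>\<^sup>+x. f x \<partial>count_space A)"
    by (rule nn_integral_bij_count_space[OF g])
  finally show ?thesis .
qed

definition UHn :: "nat \<Rightarrow> nat list set" where
  "UHn n = {v \<in> UH. length v = n}"

lemma UHn_Suc_bij: "bij_betw (\<lambda>(i, w). i # w) ({1..} \<times> UHn n) (UHn (Suc n))"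
proof (rule bij_betwI[where g="\<lambda>v. (hd v, tl v)"])
  show "(\<lambda>(i, w). i # w) \<in> {1..} \<times> UHn n \<rightarrow> UHn (Suc n)"
    by (auto simp: UHn_def UH_def)
  show "(\<lambda>v. (hd v, tl v)) \<in> UHn (Suc n) \<rightarrow> {1..} \<times> UHn n"
  proof
    fix v assume "v \<in> UHn (Suc n)"
    then obtain i w where "v = i # w" "1 \<le> i" "w \<in> UHn n"
      by (cases v) (auto simp: UHn_def UH_def)
    then show "(hd v, tl v) \<in> {1..} \<times> UHn n" by simp
  qed
  show "\<And>x. x \<in> {1..} \<times> UHn n \<Longrightarrow> (hd (case x of (i, w) \<Rightarrow> i # w), tl (case x of (i, w) \<Rightarrow> i # w)) = x"
    by auto
  show "(case (hd y, tl y) of (i, w) \<Rightarrow> i # w) = y" if "y \<in> UHn (Suc n)" for y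
  proof -
    have "y \<noteq> []" using that by (auto simp: UHn_def)
    then show ?thesis by simp
  qed
qed

lemma list_sum_len:
  fixes a :: "nat \<Rightarrow> ennreal"
  shows "(\<integral>\<^sup>+v. prod_list (map a v) \<partial>count_space (UHn n)) = (\<integral>\<^sup>+i. a i \<partial>count_space {1..}) ^ n"
proof (induction n)
  case 0
  have "UHn 0 = {[]}" by (auto simp: UHn_def UH_def)
  then show ?case by (simp add: nn_integral_count_space_finite)
next
  case (Suc n)
  let ?m = "(\<integral>\<^sup>+i. a i \<partial>count_space {1..})"
  have c1: "countable ({1..} :: nat set)" by simp
  have c2: "countable (UHn n)" by (rule countable_subset[of _ UNIV]) auto
  interpret s2: sigma_finite_measure "count_space (UHn n)"
    by (rule sigma_finite_measure_count_space_countable[OF c2])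
  have "(\<integral>\<^sup>+v. prod_list (map a v) \<partial>count_space (UHn (Suc n)))
      = (\<integral>\<^sup>+x. prod_list (map a ((\<lambda>(i, w). i # w) x)) \<partial>count_space ({1..} \<times> UHn n))"
    by (rule nn_integral_bij_count_space[OF UHn_Suc_bij, symmetric])
  also have "\<dots> = (\<integral>\<^sup>+x. a (fst x) * prod_list (map a (snd x)) \<partial>(count_space {1..} \<Otimes>\<^sub>M count_space (UHn n)))"
    by (subst pair_measure_countable[OF c1 c2]) (auto intro!: nn_integral_cong)
  also have "\<dots> = (\<integral>\<^sup>+i. \<integral>\<^sup>+w. a i * prod_list (map a w) \<partial>count_space (UHn n) \<partial>count_space {1..})"
  proof -
    have meas: "(\<lambda>x. a (fst x) * prod_list (map a (snd x))) \<in> borel_measurable (count_space {1..} \<Otimes>\<^sub>M count_space (UHn n))"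
      unfolding pair_measure_countable[OF c1 c2] by simp
    show ?thesis using s2.nn_integral_fst[OF meas] by simp
  qed
  also have "\<dots> = (\<integral>\<^sup>+i. a i * ?m ^ n \<partial>count_space {1..})"
    by (simp add: nn_integral_cmult Suc.IH)
  also have "\<dots> = ?m ^ Suc n"
    by (simp add: nn_integral_multc mult.commute)
  finally show ?case .
qed

lemma list_sum_all:
  fixes a :: "nat \<Rightarrow> ennreal"
  defines "m \<equiv> (\<integral>\<^sup>+i. a i \<partial>count_space {1..})"
  assumes m: "m < 1"
  shows "(\<integral>\<^sup>+v. prod_list (map a v) \<partial>count_space {v\<in>UH. v \<noteq> []}) < \<infinity>"
proof -
  have "(\<integral>\<^sup>+v. prod_list (map a v) \<partial>count_space {v\<in>UH. v \<noteq> []})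
      = (\<integral>\<^sup>+v. prod_list (map a v) * indicator {v\<in>UH. v \<noteq> []} v \<partial>count_space UNIV)"
    by (rule nn_integral_count_space_indicator) (simp add: NO_MATCH_def)
  also have "\<dots> = (\<integral>\<^sup>+v. (\<Sum>n. prod_list (map a v) * indicator (UHn (Suc n)) v) \<partial>count_space UNIV)"
  proof (rule nn_integral_cong)
    fix v
    have dj: "disjoint_family (\<lambda>n. UHn (Suc n))" by (auto simp: disjoint_family_on_def UHn_def)
    have U: "(\<Union>n. UHn (Suc n)) = {v\<in>UH. v \<noteq> []}"
      by (auto simp: UHn_def) (metis Suc_pred length_greater_0_conv)
    show "prod_list (map a v) * indicator {v\<in>UH. v \<noteq> []} v = (\<Sum>n. prod_list (map a v) * indicator (UHn (Suc n)) v)"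
      by (simp add: ennreal_suminf_cmult suminf_indicator[OF dj] U)
  qed
  also have "\<dots> = (\<Sum>n. \<integral>\<^sup>+v. prod_list (map a v) * indicator (UHn (Suc n)) v \<partial>count_space UNIV)"
    by (rule nn_integral_suminf) simp
  also have "\<dots> = (\<Sum>n. m ^ Suc n)"
    by (simp add: nn_integral_count_space_indicator[symmetric] list_sum_len m_def)
  also have "\<dots> < \<infinity>"
  proof -
    obtain r where r: "m = ennreal r" "0 \<le> r" "r < 1"
      using m by (cases m) (auto simp: ennreal_less_iff)
    have "(\<Sum>n. m ^ Suc n) = (\<Sum>n. ennreal (r ^ Suc n))"
      using r by (simp only: ennreal_power)
    also have "\<dots> = ennreal (\<Sum>n. r ^ Suc n)"
      using r by (intro suminf_ennreal2) (auto intro!: summable_geometric_iff[THEN iffD2] simp: summable_Suc_iff)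
    finally show ?thesis by simp
  qed
  finally show ?thesis .
qed




context cmj begin

definition a :: "nat \<Rightarrow> ennreal" where
  "a j = (\<Prod>i\<in>{1..j}. \<beta> i)"

lemma pc_prod: "(\<Prod>x\<in>pc q w. \<beta> (snd x)) = prod_list (map a w)"
proof (induction w arbitrary: q)
  case Nil then show ?case by simp
next
  case (Cons i w)
  have "(\<Prod>x\<in>pc q (i # w). \<beta> (snd x)) = (\<Prod>x\<in>{q} \<times> {1..i}. \<beta> (snd x)) * (\<Prod>x\<in>pc (q @ [i]) w. \<beta> (snd x))"
    by (simp add: prod.union_disjoint pc_disj)
  also have "(\<Prod>x\<in>{q} \<times> {1..i}. \<beta> (snd x)) = a i"
    unfolding a_def by (simp add: prod_single_times)
  also have "(\<Prod>x\<in>pc (q @ [i]) w. \<beta> (snd x)) = prod_list (map a w)"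
    by (rule Cons.IH)
  finally show ?case by simp
qed

lemma PC_prod: "(\<Prod>x\<in>PC u k w. \<beta> (snd x)) = prod_list (map a (k # w))"
  by (simp add: PC_def pc_prod mult.commute)

lemma H1_term: "(\<integral>\<^sup>+\<omega>. exp_neg \<alpha> (\<Sum>i\<in>{1..j}. Xf [] i \<omega>) \<partial>M) = a j"
proof -
  have I: "{[]} \<times> {1..j} \<subseteq> IDX" by (auto simp: IDX_def UH_def)
  have "(\<integral>\<^sup>+\<omega>. exp_neg \<alpha> (\<Sum>i\<in>{1..j}. Xf [] i \<omega>) \<partial>M) = (\<integral>\<^sup>+\<omega>. (\<Prod>x\<in>{[]} \<times> {1..j}. exp_neg \<alpha> (F x \<omega>)) \<partial>M)"
    by (simp add: exp_neg_sum prod_single_times F_def)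
  also have "\<dots> = (\<Prod>x\<in>{[]} \<times> {1..j}. \<integral>\<^sup>+\<omega>. exp_neg \<alpha> (F x \<omega>) \<partial>M)"
    by (rule indep_prod[OF _ I]) auto
  also have "\<dots> = (\<Prod>x\<in>{[]::nat list} \<times> {1..j}. \<beta> (snd x))"
  proof (rule prod.cong[OF refl])
    fix x :: "nat list \<times> nat" assume "x \<in> {[]} \<times> {1..j}"
    then have "x \<in> IDX" using I by auto
    then show "(\<integral>\<^sup>+\<omega>. exp_neg \<alpha> (F x \<omega>) \<partial>M) = \<beta> (snd x)"
      unfolding \<beta>_def by (rule integral_F) simp
  qed
  finally show ?thesis by (simp add: prod_single_times a_def)
qed

lemma Lb_from_H2:
  assumes H2: "\<exists>L<\<infinity>. (\<lambda>n. \<Prod>i\<in>{K+1..n}.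
        \<integral>\<^sup>+\<omega>. ennreal (exp (\<alpha> * (enn2real (Xp i \<omega>) - enn2real (Xf [] i \<omega>)))) \<partial>M)
        \<longlonglongrightarrow> L"
  obtains Lb where "Lb < \<infinity>" "\<And>n. (\<Prod>i\<in>{K+1..n}. d i * \<beta> i) \<le> Lb"
proof -
  from H2 obtain L where L: "L < \<infinity>" "(\<lambda>n. \<Prod>i\<in>{K+1..n}.
        \<integral>\<^sup>+\<omega>. ennreal (exp (\<alpha> * (enn2real (Xp i \<omega>) - enn2real (Xf [] i \<omega>)))) \<partial>M) \<longlonglongrightarrow> L"
    by blast
  have eq: "(\<lambda>n. \<Prod>i\<in>{K+1..n}.
        \<integral>\<^sup>+\<omega>. ennreal (exp (\<alpha> * (enn2real (Xp i \<omega>) - enn2real (Xf [] i \<omega>)))) \<partial>M) = (\<lambda>n. \<Prod>i\<in>{K+1..n}. d i * \<beta> i)"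
    by (intro ext prod.cong refl c_eq) auto
  have lim: "(\<lambda>n. \<Prod>i\<in>{K+1..n}. d i * \<beta> i) \<longlonglongrightarrow> L" using L(2) unfolding eq .
  have inc: "incseq (\<lambda>n. \<Prod>i\<in>{K+1..n}. d i * \<beta> i)"
  proof (rule incseq_SucI)
    fix n show "(\<Prod>i\<in>{K+1..n}. d i * \<beta> i) \<le> (\<Prod>i\<in>{K+1..Suc n}. d i * \<beta> i)"
      using K by (intro prod_sub_ge1 c_ge1) auto
  qed
  show ?thesis using that[OF L(1)] incseq_le[OF inc lim] by blast
qed

lemma ecard_eq: "B \<subseteq> S \<Longrightarrow> ecard B = (\<integral>\<^sup>+v. indicator B v \<partial>count_space S)"
  by (simp add: ecard_def emeasure_count_space)

theorem main:
  assumes H1: "(\<Sum>\<^sub>\<infinity>j\<in>{1..}. \<integral>\<^sup>+\<omega>. exp_neg \<alpha> (\<Sum>i\<in>{1..j}. Xf [] i \<omega>) \<partial>M) < 1"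
    and H2: "\<exists>L<\<infinity>. (\<lambda>n. \<Prod>i\<in>{K+1..n}.
        \<integral>\<^sup>+\<omega>. ennreal (exp (\<alpha> * (enn2real (Xp i \<omega>) - enn2real (Xf [] i \<omega>)))) \<partial>M)
        \<longlonglongrightarrow> L"
    and u: "u \<in> UH"
  shows "(\<integral>\<^sup>+\<omega>. ecard {v \<in> UH. v \<noteq> [] \<and> K \<le> hd v \<and> catches_up Xf u v \<omega>} \<partial>M)
           = (\<Sum>\<^sub>\<infinity>v\<in>{v \<in> UH. v \<noteq> [] \<and> K \<le> hd v}.
                emeasure M {\<omega>\<in>space M. catches_up Xf u v \<omega>})
         \<and> (\<Sum>\<^sub>\<infinity>v\<in>{v \<in> UH. v \<noteq> [] \<and> K \<le> hd v}.
                emeasure M {\<omega>\<in>space M. catches_up Xf u v \<omega>}) < \<infinity>"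
proof
  define S where "S = {v \<in> UH. v \<noteq> [] \<and> K \<le> hd v}"
  have cS: "countable S" by (rule countable_subset[of _ UNIV]) auto
  have inf_eq: "(\<Sum>\<^sub>\<infinity>v\<in>S. emeasure M {\<omega>\<in>space M. catches_up Xf u v \<omega>})
      = (\<integral>\<^sup>+v. emeasure M {\<omega>\<in>space M. catches_up Xf u v \<omega>} \<partial>count_space S)"
    by (rule infsum_nn_count[OF cS])
  show "(\<integral>\<^sup>+\<omega>. ecard {v \<in> UH. v \<noteq> [] \<and> K \<le> hd v \<and> catches_up Xf u v \<omega>} \<partial>M)
           = (\<Sum>\<^sub>\<infinity>v\<in>{v \<in> UH. v \<noteq> [] \<and> K \<le> hd v}.
                emeasure M {\<omega>\<in>space M. catches_up Xf u v \<omega>})"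
  proof -
    have "(\<integral>\<^sup>+\<omega>. ecard {v \<in> UH. v \<noteq> [] \<and> K \<le> hd v \<and> catches_up Xf u v \<omega>} \<partial>M)
        = (\<integral>\<^sup>+\<omega>. \<integral>\<^sup>+v. indicator {\<omega>\<in>space M. catches_up Xf u v \<omega>} \<omega> \<partial>count_space S \<partial>M)"
    proof (rule nn_integral_cong)
      fix \<omega> assume \<omega>: "\<omega> \<in> space M"
      have "ecard {v \<in> UH. v \<noteq> [] \<and> K \<le> hd v \<and> catches_up Xf u v \<omega>} = (\<integral>\<^sup>+v. indicator {v \<in> UH. v \<noteq> [] \<and> K \<le> hd v \<and> catches_up Xf u v \<omega>} v \<partial>count_space S)"
        by (rule ecard_eq) (auto simp: S_def)
      also have "\<dots> = (\<integral>\<^sup>+v. indicator {\<omega>\<in>space M. catches_up Xf u v \<omega>} \<omega> \<partial>count_space S)"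
        using \<omega> by (intro nn_integral_cong) (auto simp: S_def indicator_def)
      finally show "ecard {v \<in> UH. v \<noteq> [] \<and> K \<le> hd v \<and> catches_up Xf u v \<omega>} = (\<integral>\<^sup>+v. indicator {\<omega>\<in>space M. catches_up Xf u v \<omega>} \<omega> \<partial>count_space S)" .
    qed
    also have "\<dots> = (\<integral>\<^sup>+v. \<integral>\<^sup>+\<omega>. indicator {\<omega>\<in>space M. catches_up Xf u v \<omega>} \<omega> \<partial>M \<partial>count_space S)"
      by (rule nn_integral_count_space_nn_integral[OF cS]) simp
    also have "\<dots> = (\<integral>\<^sup>+v. emeasure M {\<omega>\<in>space M. catches_up Xf u v \<omega>} \<partial>count_space S)"
      by (intro nn_integral_cong nn_integral_indicator) simp
    finally show ?thesis using inf_eq by (simp add: S_def)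
  qed
  obtain Lb where Lb: "Lb < \<infinity>" "\<And>n. (\<Prod>i\<in>{K+1..n}. d i * \<beta> i) \<le> Lb"
    using Lb_from_H2[OF H2] by blast
  have m0: "(\<integral>\<^sup>+i. a i \<partial>count_space {1..}) < 1"
  proof -
    have "(\<Sum>\<^sub>\<infinity>j\<in>{1..}. \<integral>\<^sup>+\<omega>. exp_neg \<alpha> (\<Sum>i\<in>{1..j}. Xf [] i \<omega>) \<partial>M) = (\<Sum>\<^sub>\<infinity>j\<in>{1..}. a j)"
      by (rule infsum_cong) (rule H1_term)
    also have "\<dots> = (\<integral>\<^sup>+i. a i \<partial>count_space {1..})"
      by (rule infsum_nn_count) simp
    finally show ?thesis using H1 by simp
  qed
  have fin: "(\<integral>\<^sup>+v. prod_list (map a v) \<partial>count_space {v\<in>UH. v \<noteq> []}) < \<infinity>"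
    by (rule list_sum_all[OF m0])
  have "(\<integral>\<^sup>+v. emeasure M {\<omega>\<in>space M. catches_up Xf u v \<omega>} \<partial>count_space S)
      \<le> (\<integral>\<^sup>+v. prod_list (map a v) * Lb \<partial>count_space S)"
  proof (rule nn_integral_mono)
    fix v assume "v \<in> space (count_space S)"
    then have v: "v \<in> UH" "v \<noteq> []" "K \<le> hd v" by (auto simp: S_def)
    define k where "k = hd v"
    define w where "w = tl v"
    have vkw: "v = k # w" using v by (simp add: k_def w_def)
    have k: "1 \<le> k" "K \<le> k" using v K by (auto simp: k_def)
    have w: "w \<in> UH" using v(1) vkw by (auto simp: UH_def)
    have "emeasure M {\<omega>\<in>space M. catches_up Xf u (k # w) \<omega>} \<le> (\<Prod>x\<in>PC u k w. \<beta> (snd x)) * Lb"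
      by (rule bound_v[OF u k(1) w k(2) Lb(2)])
    then show "emeasure M {\<omega>\<in>space M. catches_up Xf u v \<omega>} \<le> prod_list (map a v) * Lb"
      by (simp add: vkw PC_prod)
  qed
  also have "\<dots> \<le> (\<integral>\<^sup>+v. prod_list (map a v) * Lb \<partial>count_space {v\<in>UH. v \<noteq> []})"
  proof -
    have "(\<integral>\<^sup>+v. prod_list (map a v) * Lb \<partial>count_space S) = (\<integral>\<^sup>+v. prod_list (map a v) * Lb * indicator S v \<partial>count_space UNIV)"
      by (rule nn_integral_count_space_indicator) (simp add: NO_MATCH_def)
    also have "\<dots> \<le> (\<integral>\<^sup>+v. prod_list (map a v) * Lb * indicator {v\<in>UH. v \<noteq> []} v \<partial>count_space UNIV)"
      by (intro nn_integral_mono mult_left_mono) (auto simp: S_def indicator_def)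
    also have "\<dots> = (\<integral>\<^sup>+v. prod_list (map a v) * Lb \<partial>count_space {v\<in>UH. v \<noteq> []})"
      by (rule nn_integral_count_space_indicator[symmetric]) (simp add: NO_MATCH_def)
    finally show ?thesis .
  qed
  also have "\<dots> = (\<integral>\<^sup>+v. prod_list (map a v) \<partial>count_space {v\<in>UH. v \<noteq> []}) * Lb"
    by (rule nn_integral_multc) simp
  also have "\<dots> < \<infinity>" using fin Lb(1) by (simp add: ennreal_mult_less_top)
  finally show "(\<Sum>\<^sub>\<infinity>v\<in>{v \<in> UH. v \<noteq> [] \<and> K \<le> hd v}.
                emeasure M {\<omega>\<in>space M. catches_up Xf u v \<omega>}) < \<infinity>"
    using inf_eq by (simp add: S_def)
qed

end

theorem proposition3p10:
  fixes M :: "'a measure"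
    and Xf :: "nat list \<Rightarrow> nat \<Rightarrow> 'a \<Rightarrow> ennreal"
    and Xp :: "nat \<Rightarrow> 'a \<Rightarrow> ennreal"
    and \<alpha> :: real and K :: nat and u :: "nat list"
  assumes P: "prob_space M"
    and meas: "\<And>v j. Xf v j \<in> borel_measurable M"
    and measp: "\<And>j. Xp j \<in> borel_measurable M"
    \<comment> \<open>each \<open>(X(vj))\<^sub>j\<close> is a copy of the generic sequence \<open>(X\<^sub>j)\<^sub>j = (X(j))\<^sub>j\<close>\<close>
    and copies: "\<And>v. v \<in> UH \<Longrightarrow>
       distr M (PiM {1..} (\<lambda>_. borel)) (\<lambda>\<omega>. restrict (\<lambda>j. Xf v j \<omega>) {1..})
     = distr M (PiM {1..} (\<lambda>_. borel)) (\<lambda>\<omega>. restrict (\<lambda>j. Xf [] j \<omega>) {1..})"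
    \<comment> \<open>independent over different \<open>v\<close>\<close>
    and indep_tree: "prob_space.indep_vars M (\<lambda>_. PiM {1..} (\<lambda>_. borel))
       (\<lambda>v \<omega>. restrict (\<lambda>j. Xf v j \<omega>) {1..}) UH"
    \<comment> \<open>\<open>X'\<close> is an independent copy of \<open>X\<close>\<close>
    and copy_p: "distr M (PiM {1..} (\<lambda>_. borel)) (\<lambda>\<omega>. restrict (\<lambda>j. Xp j \<omega>) {1..})
     = distr M (PiM {1..} (\<lambda>_. borel)) (\<lambda>\<omega>. restrict (\<lambda>j. Xf [] j \<omega>) {1..})"
    and indep_p: "prob_space.indep_var M
       (PiM {1..} (\<lambda>_. borel)) (\<lambda>\<omega>. restrict (\<lambda>j. Xf [] j \<omega>) {1..})
       (PiM {1..} (\<lambda>_. borel)) (\<lambda>\<omega>. restrict (\<lambda>j. Xp j \<omega>) {1..})"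
    \<comment> \<open>Assumption (A)\<close>
    and A1: "prob_space.indep_vars M (\<lambda>_. borel) (\<lambda>j. Xf [] j) {1..}"
    and A2: "\<And>j. 1 \<le> j \<Longrightarrow> AE \<omega> in M. Xf [] j \<omega> < \<infinity>"
    and A3: "(\<Sum>\<^sub>\<infinity>j\<in>{1..}. \<Prod>i\<in>{1..j}. emeasure M {\<omega>\<in>space M. Xf [] i \<omega> = 0}) < 1"
    \<comment> \<open>the hypotheses of the proposition\<close>
    and alpha: "\<alpha> > 0" and K: "1 \<le> K"
    and H1: "(\<Sum>\<^sub>\<infinity>j\<in>{1..}. \<integral>\<^sup>+\<omega>. exp_neg \<alpha> (\<Sum>i\<in>{1..j}. Xf [] i \<omega>) \<partial>M) < 1"
    and H2: "\<exists>L<\<infinity>. (\<lambda>n. \<Prod>i\<in>{K+1..n}.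
        \<integral>\<^sup>+\<omega>. ennreal (exp (\<alpha> * (enn2real (Xp i \<omega>) - enn2real (Xf [] i \<omega>)))) \<partial>M)
        \<longlonglongrightarrow> L"
    and u: "u \<in> UH"
  shows "(\<integral>\<^sup>+\<omega>. ecard {v \<in> UH. v \<noteq> [] \<and> K \<le> hd v \<and> catches_up Xf u v \<omega>} \<partial>M)
           = (\<Sum>\<^sub>\<infinity>v\<in>{v \<in> UH. v \<noteq> [] \<and> K \<le> hd v}.
                emeasure M {\<omega>\<in>space M. catches_up Xf u v \<omega>})
         \<and> (\<Sum>\<^sub>\<infinity>v\<in>{v \<in> UH. v \<noteq> [] \<and> K \<le> hd v}.
                emeasure M {\<omega>\<in>space M. catches_up Xf u v \<omega>}) < \<infinity>"
proof -
  interpret cmj M Xf Xp \<alpha> K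
  proof (intro cmj.intro cmj_axioms.intro)
  qed (use P meas measp copies indep_tree copy_p indep_p A1 A2 alpha K in auto)
  show ?thesis by (rule main[OF H1 H2 u])
qed

end
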